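(* For every integer $q\geq 1$, the graph $2*Q_q$ divides $Q_{2q}$.
   Context: $Q_q$ denotes the $q$-dimensional hypercube graph (vertices are $q$-tuples of $0$'s and $1$'s, adjacent iff they differ in exactly one coordinate). For a graph $G$, the $2$-stretch $2*G$ is the graph obtained from $G$ by replacing each edge by a path with $2$ edges (i.e. subdividing each edge once). For graphs $H$ and $G$, "$H$ divides $G$" means there is a collection of subgraphs $H_i$ of $G$, each isomorphic to $H$, such that $E(G)$ is the disjoint union of the edge sets $E(H_i)$. *)

theory Defs
  imports Main
begin

type_synonym 'a graph = "'a set \<times> 'a set set"

definition verts :: "'a graph \<Rightarrow> 'a set" where "verts G = fst G"
definition edges :: "'a graph \<Rightarrow> 'a set set" where "edges G = snd G"

definition simple_graph :: "'a graph \<Rightarrow> bool" where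
  "simple_graph G \<longleftrightarrow> finite (verts G) \<and>
     (\<forall>e\<in>edges G. \<exists>u v. u \<in> verts G \<and> v \<in> verts G \<and> u \<noteq> v \<and> e = {u, v})"

definition hypercube :: "nat \<Rightarrow> bool list graph" where
  "hypercube q =
    ({x. length x = q},
     {{x, y} | x y. length x = q \<and> length y = q \<and>
                    card {i. i < q \<and> x ! i \<noteq> y ! i} = 1})"

text \<open>2-stretch: subdivide each edge once. Original vertices are Inl v,
  the new subdivision vertex of edge e is Inr e.\<close>

definition stretch2 :: "'a graph \<Rightarrow> ('a + 'a set) graph" where
  "stretch2 G =
    (Inl ` verts G \<union> Inr ` edges G,
     {{Inl u, Inr e} | u e. e \<in> edges G \<and> u \<in> e})"

definition subgraph :: "'a graph \<Rightarrow> 'a graph \<Rightarrow> bool" where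
  "subgraph H G \<longleftrightarrow> verts H \<subseteq> verts G \<and> edges H \<subseteq> edges G \<and>
     (\<forall>e\<in>edges H. e \<subseteq> verts H)"

definition graph_iso :: "'b graph \<Rightarrow> 'a graph \<Rightarrow> bool" where
  "graph_iso H K \<longleftrightarrow> (\<exists>f. bij_betw f (verts H) (verts K) \<and>
     (\<forall>e. e \<in> edges H \<longleftrightarrow> (e \<subseteq> verts H \<and> f ` e \<in> edges K)))"

definition divides_graph :: "'b graph \<Rightarrow> 'a graph \<Rightarrow> bool" where
  "divides_graph H G \<longleftrightarrow> (\<exists>(I :: nat set) S.
     (\<forall>i\<in>I. subgraph (S i) G \<and> graph_iso H (S i)) \<and>
     (\<forall>i\<in>I. \<forall>j\<in>I. i \<noteq> j \<longrightarrow> edges (S i) \<inter> edges (S j) = {}) \<and>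
     (\<Union>i\<in>I. edges (S i)) = edges G)"

end

theory Submission imports Defs "HOL-Library.Countable" begin

definition flip :: "bool list \<Rightarrow> nat \<Rightarrow> bool list" where
  "flip V k = V[k := \<not> V!k]"

lemma length_flip[simp]: "length (flip V k) = length V" by (simp add: flip_def)

lemma flip_nth: "j < length V \<Longrightarrow> flip V k ! j = (if j = k then \<not> V!k else V!j)"
  by (simp add: flip_def nth_list_update)

lemma flip_flip[simp]: "k < length V \<Longrightarrow> flip (flip V k) k = V"
  by (simp add: flip_def)

lemma flip_neq: "k < length V \<Longrightarrow> flip V k \<noteq> V"
  by (metis flip_nth)

lemma flip_inj: "k < length V \<Longrightarrow> j < length V \<Longrightarrow> flip V k = flip V j \<Longrightarrow> k = j"
  by (metis flip_nth)

definition xorl :: "bool list \<Rightarrow> bool list \<Rightarrow> bool list" where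
  "xorl x y = map (\<lambda>(p,r). p \<noteq> r) (zip x y)"

lemma length_xorl[simp]: "length (xorl x y) = min (length x) (length y)"
  by (simp add: xorl_def)

lemma xorl_nth[simp]: "j < length x \<Longrightarrow> j < length y \<Longrightarrow> xorl x y ! j = (x!j \<noteq> y!j)"
  by (simp add: xorl_def)

lemma xorl_xorl: "length x = length a \<Longrightarrow> xorl (xorl x a) a = x"
  by (rule nth_equalityI) auto

lemma xorl_cancel: "length x = length a \<Longrightarrow> length y = length a \<Longrightarrow> xorl x a = xorl y a \<Longrightarrow> x = y"
  by (metis xorl_xorl)

lemma xorl_cancel2: "length x = length a \<Longrightarrow> length x = length b \<Longrightarrow> xorl x a = xorl x b \<Longrightarrow> a = b"
  by (rule nth_equalityI; simp) (metis xorl_nth)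

lemma xorl_inv2: "length x = length y \<Longrightarrow> xorl x (xorl x y) = y"
  by (rule nth_equalityI) auto

definition cnt :: "bool list \<Rightarrow> nat" where "cnt xs = length (filter id xs)"

lemma cnt_flip: "k < length V \<Longrightarrow> even (cnt (flip V k)) \<longleftrightarrow> \<not> even (cnt V)"
proof (induction V arbitrary: k)
  case Nil then show ?case by simp
next
  case (Cons x V)
  show ?case
  proof (cases k)
    case 0 then show ?thesis by (simp add: flip_def cnt_def)
  next
    case (Suc m)
    have "flip (x # V) k = x # flip V m" using Suc by (simp add: flip_def)
    then show ?thesis using Cons Suc by (simp add: cnt_def)
  qed
qed

lemma cnt_xorl: "length x = length y \<Longrightarrow> even (cnt (xorl x y)) \<longleftrightarrow> even (cnt x + cnt y)"
proof (induction x y rule: list_induct2)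
  case Nil then show ?case by (simp add: cnt_def xorl_def)
next
  case (Cons a x b y)
  have "xorl (a#x) (b#y) = (a \<noteq> b) # xorl x y" by (simp add: xorl_def)
  then show ?case using Cons by (cases a; cases b) (simp_all add: cnt_def)
qed

lemma cnt_append: "cnt (x @ y) = cnt x + cnt y" by (simp add: cnt_def)

lemma hc_edge_iff:
  assumes "length x = n" "length y = n"
  shows "card {i. i < n \<and> x!i \<noteq> y!i} = 1 \<longleftrightarrow> (\<exists>i<n. y = flip x i)"
proof
  assume "card {i. i < n \<and> x!i \<noteq> y!i} = 1"
  then obtain i where i: "{i. i < n \<and> x!i \<noteq> y!i} = {i}" by (rule card_1_singletonE)
  then have "i < n" by blast
  moreover have "y = flip x i"
  proof (rule nth_equalityI)
    show "length y = length (flip x i)" using assms by simp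
    fix j assume "j < length y"
    then show "y ! j = flip x i ! j" using i assms by (auto simp: flip_nth)
  qed
  ultimately show "\<exists>i<n. y = flip x i" by blast
next
  assume "\<exists>i<n. y = flip x i"
  then obtain i where "i < n" "y = flip x i" by blast
  then have "{i. i < n \<and> x!i \<noteq> y!i} = {i}" using assms by (auto simp: flip_nth split: if_splits)
  then show "card {i. i < n \<and> x!i \<noteq> y!i} = 1" by simp
qed

lemma hc_edges: "edges (hypercube n) = {{x, flip x i} | x i. length x = n \<and> i < n}"
proof (intro set_eqI iffI)
  fix e assume "e \<in> edges (hypercube n)"
  then obtain x y where e: "e = {x,y}" "length x = n" "length y = n"
    "card {i. i < n \<and> x!i \<noteq> y!i} = 1"
    unfolding hypercube_def edges_def by auto
  then obtain i where "i < n" "y = flip x i" using hc_edge_iff by blast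
  then show "e \<in> {{x, flip x i} | x i. length x = n \<and> i < n}" using e by blast
next
  fix e assume "e \<in> {{x, flip x i} | x i. length x = n \<and> i < n}"
  then obtain x i where e: "e = {x, flip x i}" "length x = n" "i < n" by blast
  then have c: "card {j. j < n \<and> x!j \<noteq> flip x i!j} = 1"
    using hc_edge_iff[of x n "flip x i"] by auto
  have "length (flip x i) = n" using e by simp
  have "\<exists>xa y. e = {xa,y} \<and> length xa = n \<and> length y = n \<and> card {j. j < n \<and> xa!j \<noteq> y!j} = 1"
    using e c \<open>length (flip x i) = n\<close> by blast
  then show "e \<in> edges (hypercube n)"
    unfolding hypercube_def edges_def by auto
qed

lemma hc_verts: "verts (hypercube n) = {x. length x = n}"
  by (simp add: hypercube_def verts_def)

definition mid :: "bool list \<Rightarrow> bool \<Rightarrow> nat \<Rightarrow> bool list set \<Rightarrow> bool list" where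
  "mid a b q e =
    map (\<lambda>j. if (\<forall>w\<in>e. w!j) then True else if (\<forall>w\<in>e. \<not> w!j) then False else b) [0..<q] @
    map (\<lambda>j. (if (\<forall>w\<in>e. w!j) then True else if (\<forall>w\<in>e. \<not> w!j) then False else \<not> b) \<noteq> a!j) [0..<q]"

lemma length_mid[simp]: "length (mid a b q e) = 2*q" by (simp add: mid_def)

lemma mid_nth1: "j < q \<Longrightarrow> mid a b q e ! j = (if (\<forall>w\<in>e. w!j) then True else if (\<forall>w\<in>e. \<not> w!j) then False else b)"
  by (simp add: mid_def nth_append)

lemma mid_nth2: "m < q \<Longrightarrow> mid a b q e ! (q+m) = ((if (\<forall>w\<in>e. w!m) then True else if (\<forall>w\<in>e. \<not> w!m) then False else \<not> b) \<noteq> a!m)"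
  by (simp add: mid_def nth_append)

lemma split_idx:
  fixes j q :: nat
  assumes "j < 2*q" "j < q \<Longrightarrow> P j" "\<And>m. m < q \<Longrightarrow> P (q+m)"
  shows "P j"
proof (cases "j < q")
  case True then show ?thesis using assms(2) by simp
next
  case False
  then have "j = q + (j - q)" "j - q < q" using assms(1) by simp_all
  then show ?thesis using assms(3)[of "j - q"] by simp
qed

lemma mid_L1:
  assumes "length u = q" "i < q" "j < q"
  shows "mid a b q {u, flip u i} ! j = (if j = i then b else u!j)"
proof -
  have F: "flip u i ! j = (if j = i then \<not> u!i else u!j)" using assms by (simp add: flip_nth)
  have Fi: "flip u i ! i = (\<not> u!i)" using assms by (simp add: flip_nth)
  show ?thesis by (simp only: mid_nth1[OF assms(3)] ball_simps F) auto
qed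

lemma mid_L2:
  assumes "length u = q" "i < q" "m < q"
  shows "mid a b q {u, flip u i} ! (q+m) = ((if m = i then \<not> b else u!m) \<noteq> a!m)"
proof -
  have F: "flip u i ! m = (if m = i then \<not> u!i else u!m)" using assms by (simp add: flip_nth)
  have Fi: "flip u i ! i = (\<not> u!i)" using assms by (simp add: flip_nth)
  show ?thesis by (simp only: mid_nth2[OF assms(3)] ball_simps F) auto
qed

lemma mid_val:
  assumes "length u = q" "length a = q" "i < q"
  shows "mid a b q {u, flip u i} = flip (u @ xorl u a) (if u!i = b then q+i else i)"
proof (rule nth_equalityI)
  show "length (mid a b q {u, flip u i}) = length (flip (u @ xorl u a) (if u!i = b then q+i else i))"
    using assms by simp
  fix j assume j: "j < length (mid a b q {u, flip u i})"
  then have j2: "j < 2*q" by simp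
  have G: "flip (u @ xorl u a) k ! j = (if j = k then \<not> (u @ xorl u a)!k else (u @ xorl u a)!j)" if "j < 2*q" for k j
    using assms that by (simp add: flip_nth)
  show "mid a b q {u, flip u i} ! j = flip (u @ xorl u a) (if u!i = b then q+i else i) ! j"
  proof (rule split_idx[OF j2])
    assume jq: "j < q"
    have A: "(u @ xorl u a) ! j = u ! j" "(u @ xorl u a) ! i = u ! i" using jq assms by (simp_all add: nth_append)
    show ?thesis unfolding mid_L1[OF assms(1,3) jq] G[OF j2] A using jq assms(3) by (auto simp: A)
  next
    fix m assume m: "m < q"
    have qm: "q + m < 2*q" using m by simp
    have A: "(u @ xorl u a) ! (q+m) = (u!m \<noteq> a!m)" "(u @ xorl u a) ! i = u ! i" "(u @ xorl u a) ! (q+i) = (u!i \<noteq> a!i)"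
      using m assms by (simp_all add: nth_append)
    show "mid a b q {u, flip u i} ! (q+m) = flip (u @ xorl u a) (if u!i = b then q+i else i) ! (q+m)"
      using m by (simp only: mid_L2[OF assms(1,3) m] G[OF qm] A) (use m assms(3) in \<open>auto simp: A\<close>)
  qed
qed

lemma mid_take:
  assumes "length u = q" "i < q"
  shows "take q (mid a b q {u, flip u i}) = (if u!i = b then u else flip u i)"
proof (rule nth_equalityI)
  show "length (take q (mid a b q {u, flip u i})) = length (if u!i = b then u else flip u i)"
    using assms by simp
  fix j assume "j < length (take q (mid a b q {u, flip u i}))"
  then have jq: "j < q" by simp
  have F: "flip u i ! j = (if j = i then \<not> u!i else u!j)" using assms jq by (simp add: flip_nth)
  have "take q (mid a b q {u, flip u i}) ! j = (if j = i then b else u!j)"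
    using jq mid_L1[OF assms jq] by simp
  then show "take q (mid a b q {u, flip u i}) ! j = (if u!i = b then u else flip u i) ! j"
    using F by (cases "u!i = b") auto
qed

lemma mid_drop:
  assumes "length u = q" "length a = q" "i < q"
  shows "xorl (drop q (mid a b q {u, flip u i})) a = flip (if u!i = b then u else flip u i) i"
proof (rule nth_equalityI)
  show "length (xorl (drop q (mid a b q {u, flip u i})) a) = length (flip (if u!i = b then u else flip u i) i)"
    using assms by simp
  fix m assume "m < length (xorl (drop q (mid a b q {u, flip u i})) a)"
  then have mq: "m < q" using assms by simp
  have F: "flip u i ! m = (if m = i then \<not> u!i else u!m)" using assms mq by (simp add: flip_nth)
  have FF: "flip (flip u i) i = u" using assms by simp
  have "xorl (drop q (mid a b q {u, flip u i})) a ! m = (if m = i then \<not> b else u!m)"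
    using mq assms mid_L2[OF assms(1,3) mq, of a b] by simp (cases b; cases "a!m"; cases "u!m"; cases "m = i"; simp)
  then show "xorl (drop q (mid a b q {u, flip u i})) a ! m = flip (if u!i = b then u else flip u i) i ! m"
    using F FF by (cases "u!i = b") auto
qed

lemma st_verts: "verts (stretch2 G) = Inl ` verts G \<union> Inr ` edges G"
  by (simp add: stretch2_def verts_def)

lemma st_edges: "edges (stretch2 G) = {{Inl u, Inr e} | u e. e \<in> edges G \<and> u \<in> e}"
  by (simp add: stretch2_def edges_def)

lemma verts_pair[simp]: "verts (A, B) = A" by (simp add: verts_def)
lemma edges_pair[simp]: "edges (A, B) = B" by (simp add: edges_def)

lemma edge_mem:
  assumes "e \<in> edges (hypercube q)" "u \<in> e"
  shows "\<exists>i<q. e = {u, flip u i} \<and> length u = q"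
proof -
  obtain x i where e: "e = {x, flip x i}" "length x = q" "i < q" using assms(1) unfolding hc_edges by blast
  show ?thesis
  proof (cases "u = x")
    case True then show ?thesis using e by blast
  next
    case False
    then have "u = flip x i" using assms(2) e by blast
    then have "e = {u, flip u i}" "length u = q" using e by auto
    then show ?thesis using e by blast
  qed
qed

lemma edge_verts: "e \<in> edges (hypercube q) \<Longrightarrow> e \<subseteq> {x. length x = q}"
  using edge_mem by blast

definition fm :: "bool list \<Rightarrow> bool \<Rightarrow> nat \<Rightarrow> bool list + bool list set \<Rightarrow> bool list" where
  "fm a b q = case_sum (\<lambda>u. u @ xorl u a) (mid a b q)"

lemma fm_Inl[simp]: "fm a b q (Inl u) = u @ xorl u a" by (simp add: fm_def)
lemma fm_Inr[simp]: "fm a b q (Inr e) = mid a b q e" by (simp add: fm_def)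

lemma mid_rec:
  assumes "e \<in> edges (hypercube q)" "length a = q"
  shows "e = {take q (mid a b q e), xorl (drop q (mid a b q e)) a}"
proof -
  obtain u where "u \<in> e" using assms(1) unfolding hc_edges by blast
  then obtain i where i: "i < q" "e = {u, flip u i}" "length u = q" using edge_mem assms by blast
  have ff: "flip (flip u i) i = u" using i by simp
  show ?thesis unfolding i(2) mid_take[OF i(3) i(1)] mid_drop[OF i(3) assms(2) i(1)]
    using ff by auto
qed

lemma Inl_rec: "length u = q \<Longrightarrow> length a = q \<Longrightarrow> take q (u @ xorl u a) = u \<and> xorl (drop q (u @ xorl u a)) a = u"
  by (simp add: xorl_xorl)

lemma fm_inj:
  assumes "length a = q"
  shows "inj_on (fm a b q) (verts (stretch2 (hypercube q)))"
proof (rule inj_onI)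
  fix x y assume x: "x \<in> verts (stretch2 (hypercube q))" and y: "y \<in> verts (stretch2 (hypercube q))"
    and eq: "fm a b q x = fm a b q y"
  have two: "\<And>e. e \<in> edges (hypercube q) \<Longrightarrow> \<exists>v w. v \<in> e \<and> w \<in> e \<and> v \<noteq> w"
  proof -
    fix e assume "e \<in> edges (hypercube q)"
    then obtain v i where "e = {v, flip v i}" "length v = q" "i < q" unfolding hc_edges by blast
    then show "\<exists>v w. v \<in> e \<and> w \<in> e \<and> v \<noteq> w" using flip_neq[of i v] by auto
  qed
  show "x = y"
  proof (cases x)
    case (Inl u)
    then have u: "length u = q" using x by (auto simp: st_verts hc_verts)
    show ?thesis
    proof (cases y)
      case (Inl v)
      then have v: "length v = q" using y by (auto simp: st_verts hc_verts)
      show ?thesis using eq Inl_rec[OF u assms] Inl_rec[OF v assms] \<open>x = Inl u\<close> Inl by simp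
    next
      case (Inr e)
      then have e: "e \<in> edges (hypercube q)" using y by (auto simp: st_verts)
      have "e = {u}" using mid_rec[OF e assms, of b] eq Inl_rec[OF u assms] \<open>x = Inl u\<close> Inr by simp
      then show ?thesis using two[OF e] by auto
    qed
  next
    case (Inr e)
    then have e: "e \<in> edges (hypercube q)" using x by (auto simp: st_verts)
    show ?thesis
    proof (cases y)
      case (Inl u)
      then have u: "length u = q" using y by (auto simp: st_verts hc_verts)
      have "e = {u}" using mid_rec[OF e assms, of b] eq Inl_rec[OF u assms] \<open>x = Inr e\<close> Inl by simp
      then show ?thesis using two[OF e] by auto
    next
      case (Inr e')
      then have e': "e' \<in> edges (hypercube q)" using y by (auto simp: st_verts)
      show ?thesis using mid_rec[OF e assms, of b] mid_rec[OF e' assms, of b] eq \<open>x = Inr e\<close> Inr by simp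
    qed
  qed
qed

lemma iso_image:
  assumes "inj_on f (verts H)" "\<forall>e\<in>edges H. e \<subseteq> verts H"
  shows "graph_iso H (f ` verts H, (`) f ` edges H)"
  unfolding graph_iso_def
proof (intro exI conjI allI)
  show "bij_betw f (verts H) (verts (f ` verts H, (`) f ` edges H))"
    using assms(1) by (simp add: bij_betw_def)
  fix e
  show "e \<in> edges H \<longleftrightarrow> (e \<subseteq> verts H \<and> f ` e \<in> edges (f ` verts H, (`) f ` edges H))"
  proof
    assume "e \<in> edges H" then show "e \<subseteq> verts H \<and> f ` e \<in> edges (f ` verts H, (`) f ` edges H)"
      using assms(2) by auto
  next
    assume a: "e \<subseteq> verts H \<and> f ` e \<in> edges (f ` verts H, (`) f ` edges H)"
    then obtain e' where e': "e' \<in> edges H" "f ` e = f ` e'" by auto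
    then have "e = e'" using inj_on_image_eq_iff[OF assms(1)] a assms(2) by blast
    then show "e \<in> edges H" using e' by simp
  qed
qed

lemma st_edge_sub: "\<forall>e\<in>edges (stretch2 (hypercube q)). e \<subseteq> verts (stretch2 (hypercube q))"
proof
  fix e assume "e \<in> edges (stretch2 (hypercube q))"
  then obtain u d where "e = {Inl u, Inr d}" "d \<in> edges (hypercube q)" "u \<in> d" by (auto simp: st_edges)
  then show "e \<subseteq> verts (stretch2 (hypercube q))"
    using edge_verts by (auto simp: st_verts hc_verts)
qed

definition E :: "nat \<Rightarrow> bool list \<Rightarrow> bool \<Rightarrow> bool list set set" where
  "E q a b = {{u @ xorl u a, flip (u @ xorl u a) (if u!i = b then q+i else i)} | u i. length u = q \<and> i < q}"

lemma edges_img: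
  assumes "length a = q"
  shows "(`) (fm a b q) ` edges (stretch2 (hypercube q)) = E q a b"
proof (intro set_eqI iffI)
  fix X assume "X \<in> (`) (fm a b q) ` edges (stretch2 (hypercube q))"
  then obtain u d where X: "X = fm a b q ` {Inl u, Inr d}" "d \<in> edges (hypercube q)" "u \<in> d"
    by (auto simp: st_edges)
  then obtain i where i: "i < q" "d = {u, flip u i}" "length u = q" using edge_mem by blast
  have "X = {u @ xorl u a, flip (u @ xorl u a) (if u!i = b then q+i else i)}"
    using X(1) mid_val[OF i(3) assms i(1), of b] i(2) by simp
  then show "X \<in> E q a b" unfolding E_def using i by blast
next
  fix X assume "X \<in> E q a b"
  then obtain u i where X: "X = {u @ xorl u a, flip (u @ xorl u a) (if u!i = b then q+i else i)}" "length u = q" "i < q"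
    unfolding E_def by blast
  have d: "{u, flip u i} \<in> edges (hypercube q)" unfolding hc_edges using X by blast
  have "{Inl u, Inr {u, flip u i}} \<in> edges (stretch2 (hypercube q))" unfolding st_edges using d by blast
  moreover have "X = fm a b q ` {Inl u, Inr {u, flip u i}}"
    using X mid_val[OF X(2) assms X(3), of b] by simp
  ultimately show "X \<in> (`) (fm a b q) ` edges (stretch2 (hypercube q))" by blast
qed

lemma evn_orig:
  assumes "length u = q" "length a = q" "even (cnt a)"
  shows "even (cnt (u @ xorl u a))"
proof -
  have "even (cnt (xorl u (xorl u a))) \<longleftrightarrow> even (cnt u + cnt (xorl u a))"
    by (rule cnt_xorl) (use assms in simp)
  moreover have "xorl u (xorl u a) = a" using assms by (simp add: xorl_inv2)
  ultimately show ?thesis using assms(3) by (simp add: cnt_append)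
qed

lemma E_sub:
  assumes "length a = q"
  shows "E q a b \<subseteq> edges (hypercube (2*q))"
proof
  fix X assume "X \<in> E q a b"
  then obtain u i where X: "X = {u @ xorl u a, flip (u @ xorl u a) (if u!i = b then q+i else i)}" "length u = q" "i < q"
    unfolding E_def by blast
  have "length (u @ xorl u a) = 2*q" using X assms by simp
  moreover have "(if u!i = b then q+i else i) < 2*q" using X by simp
  ultimately show "X \<in> edges (hypercube (2*q))" unfolding hc_edges using X(1) by blast
qed

lemma E_disj:
  assumes a: "length a = q" "even (cnt a)" and a': "length a' = q" "even (cnt a')"
    and X: "X \<in> E q a b" "X \<in> E q a' b'"
  shows "a = a' \<and> b = b'"
proof -
  obtain u i where u: "X = {u @ xorl u a, flip (u @ xorl u a) (if u!i = b then q+i else i)}" "length u = q" "i < q"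
    using X(1) unfolding E_def by blast
  obtain u' i' where u': "X = {u' @ xorl u' a', flip (u' @ xorl u' a') (if u'!i' = b' then q+i' else i')}" "length u' = q" "i' < q"
    using X(2) unfolding E_def by blast
  define V where "V = u @ xorl u a"
  define V' where "V' = u' @ xorl u' a'"
  define k where "k = (if u!i = b then q+i else i)"
  define k' where "k' = (if u'!i' = b' then q+i' else i')"
  have lV: "length V = 2*q" "length V' = 2*q" using u u' a a' by (simp_all add: V_def V'_def)
  have kl: "k < 2*q" "k' < 2*q" using u u' by (simp_all add: k_def k'_def)
  have eV: "even (cnt V)" "even (cnt V')" using evn_orig u(2) u'(2) a a' by (simp_all add: V_def V'_def)
  have oV: "odd (cnt (flip V k))" "odd (cnt (flip V' k'))" using cnt_flip eV lV kl by auto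
  have XX: "{V, flip V k} = {V', flip V' k'}" using u(1) u'(1) by (simp add: V_def V'_def k_def k'_def)
  have "V' \<noteq> flip V k" using eV oV by auto
  then have VV: "V' = V" using XX by blast
  have "flip V k \<noteq> V" using flip_neq lV kl by simp
  then have "flip V k = flip V k'" using XX VV by blast
  then have kk: "k = k'" using flip_inj[of k V k'] lV kl by simp
  have t1: "u = take q V" using u(2) by (simp add: V_def)
  have t2: "u' = take q V'" using u'(2) by (simp add: V'_def)
  have uu: "u = u'" using t1 t2 VV by simp
  then have xx: "xorl u a = xorl u a'" using VV unfolding V_def V'_def by simp
  have aa: "a = a'" by (rule xorl_cancel2[OF _ _ xx]) (simp_all add: u(2) a(1) a'(1))
  have "b = b'" using kk uu u(3) u'(3) unfolding k_def k'_def by (auto split: if_splits)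
  then show ?thesis using aa by simp
qed

lemma cover_aux:
  assumes "length V = 2*q" "k < 2*q" "even (cnt V)"
  shows "\<exists>a b. length a = q \<and> even (cnt a) \<and> {V, flip V k} \<in> E q a b"
proof -
  define u where "u = take q V"
  define y where "y = drop q V"
  define a where "a = xorl u y"
  have lu: "length u = q" "length y = q" using assms by (simp_all add: u_def y_def)
  have Vuy: "V = u @ y" by (simp add: u_def y_def)
  have xa: "xorl u a = y" using lu by (simp add: a_def xorl_inv2)
  have la: "length a = q" using lu by (simp add: a_def)
  have ea: "even (cnt a)" using cnt_xorl[of u y] lu assms(3) Vuy by (simp add: a_def cnt_append)
  have V: "V = u @ xorl u a" using Vuy xa by simp
  show ?thesis
  proof (cases "k < q")
    case True
    define b where "b = (\<not> u!k)"
    have "k = (if u!k = b then q+k else k)" by (simp add: b_def)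
    then have "{V, flip V k} = {u @ xorl u a, flip (u @ xorl u a) (if u!k = b then q+k else k)}" using V by simp
    then have "{V, flip V k} \<in> E q a b" unfolding E_def using True lu by blast
    then show ?thesis using la ea by blast
  next
    case False
    define i where "i = k - q"
    have i: "i < q" "k = q + i" using False assms(2) by (simp_all add: i_def)
    define b where "b = u!i"
    have "k = (if u!i = b then q+i else i)" using i by (simp add: b_def)
    then have "{V, flip V k} = {u @ xorl u a, flip (u @ xorl u a) (if u!i = b then q+i else i)}" using V by simp
    then have "{V, flip V k} \<in> E q a b" unfolding E_def using i lu by blast
    then show ?thesis using la ea by blast
  qed
qed

lemma E_cover:
  assumes "X \<in> edges (hypercube (2*q))"
  shows "\<exists>a b. length a = q \<and> even (cnt a) \<and> X \<in> E q a b"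
proof -
  obtain V k where X: "X = {V, flip V k}" "length V = 2*q" "k < 2*q" using assms unfolding hc_edges by blast
  show ?thesis
  proof (cases "even (cnt V)")
    case True then show ?thesis using cover_aux X by simp
  next
    case False
    define V' where "V' = flip V k"
    have "even (cnt V')" using False cnt_flip X by (simp add: V'_def)
    moreover have "length V' = 2*q" using X by (simp add: V'_def)
    moreover have "X = {V', flip V' k}" using X by (auto simp: V'_def)
    ultimately show ?thesis using cover_aux X by metis
  qed
qed

definition Gc :: "nat \<Rightarrow> bool list \<times> bool \<Rightarrow> bool list graph" where
  "Gc q c = (fm (fst c) (snd c) q ` verts (stretch2 (hypercube q)),
             (`) (fm (fst c) (snd c) q) ` edges (stretch2 (hypercube q)))"

definition Cs :: "nat \<Rightarrow> (bool list \<times> bool) set" where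
  "Cs q = {c. length (fst c) = q \<and> even (cnt (fst c))}"

lemma Gc_edges: "c \<in> Cs q \<Longrightarrow> edges (Gc q c) = E q (fst c) (snd c)"
  unfolding Gc_def Cs_def using edges_img by simp

lemma Gc_good:
  assumes "c \<in> Cs q"
  shows "subgraph (Gc q c) (hypercube (2*q)) \<and> graph_iso (stretch2 (hypercube q)) (Gc q c)"
proof
  have la: "length (fst c) = q" using assms by (simp add: Cs_def)
  show "graph_iso (stretch2 (hypercube q)) (Gc q c)"
    unfolding Gc_def by (rule iso_image[OF fm_inj[OF la] st_edge_sub])
  have vs: "verts (Gc q c) \<subseteq> verts (hypercube (2*q))"
  proof
    fix z assume "z \<in> verts (Gc q c)"
    then obtain x where x: "x \<in> verts (stretch2 (hypercube q))" "z = fm (fst c) (snd c) q x" by (auto simp: Gc_def)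
    then show "z \<in> verts (hypercube (2*q))"
      using la by (auto simp: st_verts hc_verts)
  qed
  have es: "edges (Gc q c) \<subseteq> edges (hypercube (2*q))"
    using Gc_edges[OF assms] E_sub[OF la] by simp
  have ev: "\<forall>e\<in>edges (Gc q c). e \<subseteq> verts (Gc q c)"
    using st_edge_sub by (auto simp: Gc_def)
  show "subgraph (Gc q c) (hypercube (2*q))" unfolding subgraph_def using vs es ev by blast
qed

theorem proposition2:
  fixes q :: nat
  assumes "q \<ge> 1"
  shows "divides_graph (stretch2 (hypercube q)) (hypercube (2 * q))"
  unfolding divides_graph_def
proof (intro exI conjI)
  let ?I = "to_nat ` Cs q"
  let ?S = "\<lambda>n. Gc q (from_nat n)"
  show "\<forall>i\<in>?I. subgraph (?S i) (hypercube (2*q)) \<and> graph_iso (stretch2 (hypercube q)) (?S i)"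
    using Gc_good by auto
  show "\<forall>i\<in>?I. \<forall>j\<in>?I. i \<noteq> j \<longrightarrow> edges (?S i) \<inter> edges (?S j) = {}"
  proof (intro ballI impI)
    fix i j assume i: "i \<in> ?I" and j: "j \<in> ?I" and ij: "i \<noteq> j"
    obtain c where c: "c \<in> Cs q" "i = to_nat c" using i by blast
    obtain d where d: "d \<in> Cs q" "j = to_nat d" using j by blast
    have cd: "c \<noteq> d" using ij c d by auto
    show "edges (?S i) \<inter> edges (?S j) = {}"
    proof (rule ccontr)
      assume "edges (?S i) \<inter> edges (?S j) \<noteq> {}"
      then obtain X where "X \<in> E q (fst c) (snd c)" "X \<in> E q (fst d) (snd d)"
        using Gc_edges c d by auto
      then have "fst c = fst d \<and> snd c = snd d" using E_disj c(1) d(1) unfolding Cs_def by blast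
      then show False using cd by (simp add: prod_eq_iff)
    qed
  qed
  show "(\<Union>i\<in>?I. edges (?S i)) = edges (hypercube (2*q))"
  proof
    show "(\<Union>i\<in>?I. edges (?S i)) \<subseteq> edges (hypercube (2*q))"
    proof
      fix X assume "X \<in> (\<Union>i\<in>?I. edges (?S i))"
      then obtain c where c: "c \<in> Cs q" "X \<in> edges (Gc q c)" by auto
      then show "X \<in> edges (hypercube (2*q))" using Gc_good[OF c(1)] unfolding subgraph_def by blast
    qed
    show "edges (hypercube (2*q)) \<subseteq> (\<Union>i\<in>?I. edges (?S i))"
    proof
      fix X assume "X \<in> edges (hypercube (2*q))"
      then obtain a b where ab: "length a = q" "even (cnt a)" "X \<in> E q a b" using E_cover by blast
      then have c: "(a,b) \<in> Cs q" by (simp add: Cs_def)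
      then have "X \<in> edges (?S (to_nat (a,b)))" using Gc_edges ab by simp
      then show "X \<in> (\<Union>i\<in>?I. edges (?S i))" using c by blast
    qed
  qed
qed

end
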